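(* Let $H=\sum_{a=1}^M H_a$ be a stoquastic frustration-free Hamiltonian on $\mathcal{Q}^n$ and let $\Pi_a$ be the spectral projector of $H_a$ onto its zero eigenvalue. Suppose $H|\psi\rangle=0$ for some non-negative state $|\psi\rangle$. If for some $x\in\mathcal{S}(\psi)$, $y\in\{0,1\}^n$ and $a\in\{1,\ldots,M\}$ one has $\langle y|H_a|x\rangle<0$, then $y\in\mathcal{S}(\psi)$ and $$\frac{\langle y|\psi\rangle}{\langle x|\psi\rangle}=\sqrt{\frac{\langle y|\Pi_a|y\rangle}{\langle x|\Pi_a|x\rangle}}.$$
   Context: $\mathcal{Q}^n=(\mathbb{C}^2)^{\otimes n}$ with standard basis $\{|x\rangle\}$, $x\in\{0,1\}^n$. $H=\sum_a H_a$ is a local Hamiltonian (each $H_a$ acts non-trivially on $O(1)$ qubits). It is stoquastic if each $H_a$ has real non-positive off-diagonal entries in the standard basis, and frustration-free if each $H_a$ is positive semidefinite and the ground-state of $H$ is a zero eigenvector of every $H_a$. A non-negative state is a normalized vector with real non-negative amplitudes in the standard basis; its support is $\mathcal{S}(\psi)=\{x:\langle x|\psi\rangle>0\}$. *)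

theory Defs
  imports Complex_Main
begin

text \<open>Standard basis of the n-qubit space: bit strings of length n.
  Vectors and operators are functions on bit strings; only their values on
  the basis matter.\<close>

definition basis :: "nat \<Rightarrow> bool list set" where
  "basis n = {x. length x = n}"

type_synonym qvec = "bool list \<Rightarrow> complex"
type_synonym qop = "bool list \<Rightarrow> bool list \<Rightarrow> complex"

text \<open>Matrix entry convention: A x y = <x|A|y>.\<close>

definition mat_vec :: "nat \<Rightarrow> qop \<Rightarrow> qvec \<Rightarrow> qvec" where
  "mat_vec n A v = (\<lambda>x. \<Sum>y\<in>basis n. A x y * v y)"

definition mat_mult :: "nat \<Rightarrow> qop \<Rightarrow> qop \<Rightarrow> qop" where
  "mat_mult n A B = (\<lambda>x z. \<Sum>y\<in>basis n. A x y * B y z)"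

definition hermitian :: "nat \<Rightarrow> qop \<Rightarrow> bool" where
  "hermitian n A \<longleftrightarrow> (\<forall>x\<in>basis n. \<forall>y\<in>basis n. A y x = cnj (A x y))"

definition psd :: "nat \<Rightarrow> qop \<Rightarrow> bool" where
  "psd n A \<longleftrightarrow> hermitian n A \<and>
     (\<forall>v. 0 \<le> Re (\<Sum>x\<in>basis n. cnj (v x) * mat_vec n A v x))"

text \<open>Locality: A acts non-trivially only on the qubits in S.\<close>

definition acts_on :: "nat \<Rightarrow> nat set \<Rightarrow> qop \<Rightarrow> bool" where
  "acts_on n S A \<longleftrightarrow> (\<exists>h :: (nat \<Rightarrow> bool) \<Rightarrow> (nat \<Rightarrow> bool) \<Rightarrow> complex.
     \<forall>x\<in>basis n. \<forall>y\<in>basis n.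
       A x y = (if (\<forall>i<n. i \<notin> S \<longrightarrow> x ! i = y ! i)
                then h (\<lambda>i. i \<in> S \<and> x ! i) (\<lambda>i. i \<in> S \<and> y ! i) else 0))"

definition k_local :: "nat \<Rightarrow> nat \<Rightarrow> qop \<Rightarrow> bool" where
  "k_local n k A \<longleftrightarrow> (\<exists>S. S \<subseteq> {..<n} \<and> card S \<le> k \<and> acts_on n S A)"

definition stoquastic_term :: "nat \<Rightarrow> qop \<Rightarrow> bool" where
  "stoquastic_term n A \<longleftrightarrow> (\<forall>x\<in>basis n. \<forall>y\<in>basis n.
      x \<noteq> y \<longrightarrow> A x y \<in> \<real> \<and> Re (A x y) \<le> 0)"

definition ham_sum :: "nat \<Rightarrow> (nat \<Rightarrow> qop) \<Rightarrow> qop" where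
  "ham_sum M Hs = (\<lambda>x y. \<Sum>a=1..M. Hs a x y)"

definition eigvec :: "nat \<Rightarrow> qop \<Rightarrow> qvec \<Rightarrow> complex \<Rightarrow> bool" where
  "eigvec n A v lam \<longleftrightarrow> (\<exists>x\<in>basis n. v x \<noteq> 0) \<and>
     (\<forall>x\<in>basis n. mat_vec n A v x = lam * v x)"

definition ground_state :: "nat \<Rightarrow> qop \<Rightarrow> qvec \<Rightarrow> bool" where
  "ground_state n A v \<longleftrightarrow> (\<exists>lam. eigvec n A v lam \<and>
     (\<forall>w mu. eigvec n A w mu \<longrightarrow> Re lam \<le> Re mu))"

definition frustration_free :: "nat \<Rightarrow> nat \<Rightarrow> (nat \<Rightarrow> qop) \<Rightarrow> bool" where
  "frustration_free n M Hs \<longleftrightarrow> (\<forall>a\<in>{1..M}. psd n (Hs a)) \<and>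
     (\<forall>v. ground_state n (ham_sum M Hs) v \<longrightarrow>
        (\<forall>a\<in>{1..M}. \<forall>x\<in>basis n. mat_vec n (Hs a) v x = 0))"

definition zero_projector :: "nat \<Rightarrow> qop \<Rightarrow> qop \<Rightarrow> bool" where
  "zero_projector n A P \<longleftrightarrow> hermitian n P \<and>
     (\<forall>x\<in>basis n. \<forall>y\<in>basis n. mat_mult n P P x y = P x y) \<and>
     (\<forall>v. (\<forall>x\<in>basis n. mat_vec n A v x = 0) \<longleftrightarrow>
          (\<forall>x\<in>basis n. mat_vec n P v x = v x))"

definition nonneg_state :: "nat \<Rightarrow> qvec \<Rightarrow> bool" where
  "nonneg_state n psi \<longleftrightarrow> (\<forall>x\<in>basis n. psi x \<in> \<real> \<and> 0 \<le> Re (psi x)) \<and>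
     (\<Sum>x\<in>basis n. (cmod (psi x))\<^sup>2) = 1"

definition support :: "nat \<Rightarrow> qvec \<Rightarrow> bool list set" where
  "support n psi = {x\<in>basis n. 0 < Re (psi x)}"

end

theory Submission
  imports Defs
begin

lemma finite_basis: "finite (basis n)"
proof -
  have "basis n = {xs. set xs \<subseteq> (UNIV::bool set) \<and> length xs = n}"
    by (auto simp: basis_def)
  thus ?thesis using finite_lists_length_eq[of "UNIV::bool set" n] by simp
qed

lemma real_entries:
  assumes "hermitian n A" "stoquastic_term n A" "u \<in> basis n" "v \<in> basis n"
  shows "A u v = complex_of_real (Re (A u v))"
proof (cases "u = v")
  case True
  then have "A u u = cnj (A u u)" using assms(1,3) unfolding hermitian_def by blast
  then have "Im (A u u) = 0" by (metis cnj.simps(2) complex.expand neg_equal_zero)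
  then show ?thesis using True by (simp add: complex_eq_iff)
next
  case False
  then have "A u v \<in> \<real>" using assms(2-4) unfolding stoquastic_term_def by blast
  then show ?thesis by (simp add: complex_is_Real_iff complex_eq_iff)
qed

lemma psd_real:
  assumes "psd n A" "stoquastic_term n A"
  shows "0 \<le> (\<Sum>u\<in>basis n. f u * (\<Sum>v\<in>basis n. Re (A u v) * f v))"
proof -
  have h: "hermitian n A" using assms(1) psd_def by blast
  have "0 \<le> Re (\<Sum>u\<in>basis n. cnj (complex_of_real (f u)) *
     mat_vec n A (\<lambda>v. complex_of_real (f v)) u)"
    using conjunct2[OF assms(1)[unfolded psd_def], rule_format, of "\<lambda>v. complex_of_real (f v)"] .
  also have "(\<Sum>u\<in>basis n. cnj (complex_of_real (f u)) *
     mat_vec n A (\<lambda>v. complex_of_real (f v)) u)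
    = (\<Sum>u\<in>basis n. complex_of_real (f u * (\<Sum>v\<in>basis n. Re (A u v) * f v)))"
  proof (rule sum.cong[OF refl])
    fix u assume u: "u \<in> basis n"
    have "mat_vec n A (\<lambda>v. complex_of_real (f v)) u
       = (\<Sum>v\<in>basis n. complex_of_real (Re (A u v) * f v))"
      unfolding mat_vec_def
      by (rule sum.cong[OF refl], subst real_entries[OF h assms(2) u], auto)
    then show "cnj (complex_of_real (f u)) * mat_vec n A (\<lambda>v. complex_of_real (f v)) u
      = complex_of_real (f u * (\<Sum>v\<in>basis n. Re (A u v) * f v))"
      by (simp add: of_real_sum)
  qed
  finally show ?thesis by (simp add: of_real_sum[symmetric])
qed

lemma psd_diag:
  assumes "psd n A" "u \<in> basis n"
  shows "0 \<le> Re (A u u)"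
proof -
  let ?v = "\<lambda>w. if w = u then (1::complex) else 0"
  have fin: "finite (basis n)" by (rule finite_basis)
  have "0 \<le> Re (\<Sum>x\<in>basis n. cnj (?v x) * mat_vec n A ?v x)"
    using conjunct2[OF assms(1)[unfolded psd_def], rule_format, of ?v] .
  also have "(\<Sum>x\<in>basis n. cnj (?v x) * mat_vec n A ?v x)
     = (\<Sum>x\<in>basis n. if x = u then mat_vec n A ?v x else 0)"
    by (rule sum.cong) auto
  also have "\<dots> = mat_vec n A ?v u"
    using fin assms(2) by simp
  also have "mat_vec n A ?v u = A u u"
    using fin assms(2) unfolding mat_vec_def by (simp add: if_distrib cong: if_cong)
  finally show ?thesis .
qed


lemma kernel_zero:
  assumes psdA: "psd n A" and st: "stoquastic_term n A"
   and w0: "\<forall>u\<in>basis n. mat_vec n A w u = 0"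
   and wx: "w x = 0" and x: "x \<in> basis n" and y: "y \<in> basis n"
   and neg: "Re (A y x) < 0"
  shows "w y = 0"
proof -
  define B where "B = basis n"
  have fin: "finite B" unfolding B_def by (rule finite_basis)
  have h: "hermitian n A" using psdA psd_def by blast
  define R where "R u v = Re (A u v)" for u v
  have Rsym: "R u v = R v u" if "u \<in> B" "v \<in> B" for u v
    using h that unfolding hermitian_def R_def B_def by (metis cnj.simps(1))
  have Roff: "R u v \<le> 0" if "u \<in> B" "v \<in> B" "u \<noteq> v" for u v
    using st that unfolding stoquastic_term_def R_def B_def by blast
  have Areal: "A u v = complex_of_real (R u v)" if "u \<in> B" "v \<in> B" for u v
    using real_entries[OF h st] that unfolding R_def B_def by blast
  define z where "z u = cmod (w u)" for u
  define Q where "Q f = (\<Sum>u\<in>B. f u * (\<Sum>v\<in>B. R u v * f v))" for f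
  have Qpos: "0 \<le> Q f" for f
    using psd_real[OF psdA st, of f] unfolding Q_def R_def B_def .
  have termle: "z u * (R u v * z v) \<le> Re (cnj (w u) * A u v * w v)"
    if "u \<in> B" "v \<in> B" for u v
  proof -
    have e: "Re (cnj (w u) * A u v * w v) = R u v * Re (cnj (w u) * w v)"
      using Areal[OF that] by (simp add: algebra_simps)
    show ?thesis
    proof (cases "u = v")
      case True
      have "Re (cnj (w u) * w u) = (cmod (w u))^2"
        by (simp add: cmod_power2) (simp add: power2_eq_square)
      then show ?thesis using e True unfolding z_def by (simp add: power2_eq_square)
    next
      case False
      have "Re (cnj (w u) * w v) \<le> cmod (cnj (w u) * w v)" by (rule complex_Re_le_cmod)
      also have "\<dots> = z u * z v" unfolding z_def by (simp add: norm_mult)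
      finally have "R u v * (z u * z v) \<le> R u v * Re (cnj (w u) * w v)"
        using Roff[OF that False] by (rule mult_left_mono_neg)
      then show ?thesis using e by (simp add: algebra_simps)
    qed
  qed
  have claimA: "Q z \<le> 0"
  proof -
    have "Q z = (\<Sum>u\<in>B. \<Sum>v\<in>B. z u * (R u v * z v))"
      unfolding Q_def by (simp add: sum_distrib_left)
    also have "\<dots> \<le> (\<Sum>u\<in>B. \<Sum>v\<in>B. Re (cnj (w u) * A u v * w v))"
      by (intro sum_mono termle)
    also have "\<dots> = Re (\<Sum>u\<in>B. cnj (w u) * mat_vec n A w u)"
      unfolding mat_vec_def B_def by (simp add: sum_distrib_left mult.assoc)
    also have "\<dots> = 0" using w0 unfolding B_def by simp
    finally show ?thesis .
  qed
  define b where "b = (\<Sum>v\<in>B. R x v * z v)"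
  have xB: "x \<in> B" and yB: "y \<in> B" using x y B_def by auto
  have claimB: "Q (\<lambda>u. z u + (if u = x then t else 0)) = Q z + 2 * t * b + t^2 * R x x" for t
  proof -
    let ?f = "\<lambda>u. z u + (if u = x then t else 0)"
    define g where "g u = (\<Sum>v\<in>B. R u v * z v)" for u
    have inner: "(\<Sum>v\<in>B. R u v * ?f v) = g u + t * R u x" for u
    proof -
      have "(\<Sum>v\<in>B. R u v * ?f v) = g u + (\<Sum>v\<in>B. if v = x then R u v * t else 0)"
        unfolding g_def sum.distrib[symmetric] by (rule sum.cong) (auto simp: algebra_simps)
      also have "(\<Sum>v\<in>B. if v = x then R u v * t else 0) = R u x * t"
        using fin xB by simp
      finally show ?thesis by simp
    qed
    have "Q ?f = (\<Sum>u\<in>B. ?f u * (g u + t * R u x))"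
      unfolding Q_def by (simp add: inner)
    also have "\<dots> = (\<Sum>u\<in>B. z u * g u) + t * (\<Sum>u\<in>B. z u * R u x)
        + (\<Sum>u\<in>B. if u = x then t * (g u + t * R u x) else 0)"
      unfolding sum_distrib_left sum.distrib[symmetric] by (rule sum.cong) (auto simp: algebra_simps)
    also have "(\<Sum>u\<in>B. if u = x then t * (g u + t * R u x) else 0) = t * (g x + t * R x x)"
      using fin xB by simp
    also have "(\<Sum>u\<in>B. z u * R u x) = b"
      unfolding b_def by (rule sum.cong[OF refl]) (simp add: Rsym xB)
    also have "(\<Sum>u\<in>B. z u * g u) = Q z" unfolding Q_def g_def ..
    also have "g x = b" unfolding g_def b_def ..
    finally show ?thesis by (simp add: algebra_simps power2_eq_square)
  qed
  have terms_nonpos: "R x v * z v \<le> 0" if "v \<in> B" for v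
  proof (cases "v = x")
    case True then show ?thesis using wx z_def by simp
  next
    case False
    then have "R x v \<le> 0" using Roff[OF xB that] by auto
    moreover have "0 \<le> z v" unfolding z_def by simp
    ultimately show ?thesis by (simp add: mult_nonpos_nonneg)
  qed
  have bnp: "b \<le> 0" unfolding b_def by (rule sum_nonpos) (use terms_nonpos in auto)
  have b0: "b = 0"
  proof (rule ccontr)
    assume bne: "b \<noteq> 0"
    define c where "c = R x x"
    define d where "d = \<bar>c\<bar> + 1"
    have dpos: "d > 0" unfolding d_def by simp
    define t where "t = - b / d"
    have "0 \<le> Q z + 2 * t * b + t^2 * c"
      using Qpos[of "\<lambda>u. z u + (if u = x then t else 0)"] claimB[of t] c_def by simp
    then have "0 \<le> (Q z + 2 * t * b + t^2 * c) * d^2" using dpos by simp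
    also have "\<dots> = Q z * d^2 - 2 * b^2 * d + b^2 * c"
      using dpos unfolding t_def by (simp add: field_simps power2_eq_square)
    also have "b^2 * c \<le> b^2 * d" unfolding d_def by (intro mult_left_mono) auto
    then have "Q z * d^2 - 2 * b^2 * d + b^2 * c \<le> Q z * d^2 - b^2 * d" by (simp add: algebra_simps)
    also have "Q z * d^2 \<le> 0" using claimA by (simp add: mult_nonpos_nonneg)
    then have "Q z * d^2 - b^2 * d < 0" using bne dpos
      by (smt (verit, best) mult_pos_pos zero_less_power2)
    finally show False by simp
  qed
  have "\<forall>v\<in>B. - (R x v * z v) = 0"
    using sum_nonneg_eq_0_iff[OF fin, of "\<lambda>v. - (R x v * z v)"] terms_nonpos b0
    unfolding b_def by (simp add: sum_negf)
  then have "R x y * z y = 0" using yB by auto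
  moreover have "R x y < 0" using neg Rsym[OF xB yB] unfolding R_def by simp
  ultimately have "z y = 0" by simp
  then show ?thesis unfolding z_def by simp
qed


lemma mat_vec_ham: "mat_vec n (ham_sum M Hs) w u = (\<Sum>b=1..M. mat_vec n (Hs b) w u)"
  unfolding mat_vec_def ham_sum_def by (simp add: sum_distrib_right sum.swap[of _ "basis n"])

lemma eig_nonneg:
  assumes psds: "\<forall>b\<in>{1..M}. psd n (Hs b)" and e: "eigvec n (ham_sum M Hs) w mu"
  shows "0 \<le> Re mu"
proof -
  define B where "B = basis n"
  have fin: "finite B" unfolding B_def by (rule finite_basis)
  define N where "N = (\<Sum>u\<in>B. (cmod (w u))^2)"
  obtain u0 where u0: "u0 \<in> B" "w u0 \<noteq> 0" using e unfolding eigvec_def B_def by blast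
  have "0 < N" unfolding N_def
    using fin u0 by (intro sum_pos2[where i=u0]) auto
  have "(\<Sum>u\<in>B. cnj (w u) * mat_vec n (ham_sum M Hs) w u) = (\<Sum>u\<in>B. mu * (cnj (w u) * w u))"
    using e unfolding eigvec_def B_def by (intro sum.cong) auto
  also have "\<dots> = mu * complex_of_real N"
    unfolding N_def sum_distrib_left of_real_sum
    by (rule sum.cong[OF refl]) (simp add: mult.commute[of "cnj _"] complex_mult_cnj cmod_power2)
  finally have eq: "(\<Sum>u\<in>B. cnj (w u) * mat_vec n (ham_sum M Hs) w u) = mu * complex_of_real N" .
  have "(\<Sum>u\<in>B. cnj (w u) * mat_vec n (ham_sum M Hs) w u)
      = (\<Sum>b=1..M. \<Sum>u\<in>B. cnj (w u) * mat_vec n (Hs b) w u)"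
    unfolding mat_vec_ham sum_distrib_left by (rule sum.swap)
  then have "Re (mu * complex_of_real N) = (\<Sum>b=1..M. Re (\<Sum>u\<in>B. cnj (w u) * mat_vec n (Hs b) w u))"
    using eq by simp
  also have "\<dots> \<ge> 0"
    using psds unfolding psd_def B_def by (intro sum_nonneg) blast
  finally have "0 \<le> Re mu * N" by simp
  then show ?thesis using \<open>0 < N\<close> by (simp add: zero_le_mult_iff)
qed


theorem lemma4p5:
  fixes n M k :: nat and Hs Pi :: "nat \<Rightarrow> qop" and psi :: qvec
    and x y :: "bool list" and a :: nat
  assumes local: "\<forall>b\<in>{1..M}. k_local n k (Hs b)"
    and stoq: "\<forall>b\<in>{1..M}. stoquastic_term n (Hs b)"
    and ff: "frustration_free n M Hs"
    and proj: "\<forall>b\<in>{1..M}. zero_projector n (Hs b) (Pi b)"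
    and psi: "nonneg_state n psi"
    and ground: "\<forall>z\<in>basis n. mat_vec n (ham_sum M Hs) psi z = 0"
    and x: "x \<in> support n psi"
    and y: "y \<in> basis n"
    and a: "a \<in> {1..M}"
    and neg: "Hs a y x \<in> \<real> \<and> Re (Hs a y x) < 0"
  shows "y \<in> support n psi \<and>
    psi y / psi x = complex_of_real (sqrt (Re (Pi a y y) / Re (Pi a x x)))"
proof -
  define B where "B = basis n"
  have fin: "finite B" unfolding B_def by (rule finite_basis)
  define A where "A = Hs a"
  define P where "P = Pi a"
  define p where "p u = Re (psi u)" for u
  have xB: "x \<in> B" and px: "0 < p x" using x unfolding support_def B_def p_def by auto
  have yB: "y \<in> B" using y B_def by simp
  have psireal: "psi u = complex_of_real (p u)" if "u \<in> B" for u
    using psi that unfolding nonneg_state_def B_def p_def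
    by (simp add: complex_is_Real_iff complex_eq_iff)
  have pnn: "0 \<le> p u" if "u \<in> B" for u
    using psi that unfolding nonneg_state_def B_def p_def by simp
  have psds: "\<forall>b\<in>{1..M}. psd n (Hs b)" using ff frustration_free_def by blast
  have gs: "ground_state n (ham_sum M Hs) psi"
    unfolding ground_state_def
  proof (intro exI[of _ 0] conjI allI impI)
    show "eigvec n (ham_sum M Hs) psi 0"
    proof -
      have "psi x \<noteq> 0" using px unfolding p_def by auto
      then show ?thesis unfolding eigvec_def using ground xB B_def by auto
    qed
  next
    fix w mu assume "eigvec n (ham_sum M Hs) w mu"
    then show "Re 0 \<le> Re mu" using eig_nonneg[OF psds] by simp
  qed
  have Apsi: "\<forall>u\<in>basis n. mat_vec n A psi u = 0"
    using conjunct2[OF ff[unfolded frustration_free_def], rule_format, OF gs a] unfolding A_def by blast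
  have psdA: "psd n A" using psds a A_def by blast
  have stA: "stoquastic_term n A" using stoq a A_def by blast
  have hA: "hermitian n A" using psdA psd_def by blast
  have negA: "Re (A y x) < 0" using neg A_def by simp
  have Rxx: "0 \<le> Re (A u u)" if "u \<in> B" for u using psd_diag[OF psdA] that B_def by simp
  have xy: "x \<noteq> y" using Rxx[OF xB] negA by auto
  have Areal: "A u v = complex_of_real (Re (A u v))" if "u \<in> B" "v \<in> B" for u v
    using real_entries[OF hA stA] that B_def by simp
  have py: "0 < p y"
  proof -
    have "0 = Re (mat_vec n A psi y)" using Apsi y by simp
    also have "\<dots> = (\<Sum>u\<in>B. Re (A y u) * p u)"
      unfolding mat_vec_def B_def[symmetric] Re_sum
      by (rule sum.cong[OF refl]) (simp add: psireal)
    also have "\<dots> = Re (A y y) * p y + (Re (A y x) * p x + (\<Sum>u\<in>B - {y} - {x}. Re (A y u) * p u))"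
      using fin xB yB xy by (simp add: sum.remove[of B y] sum.remove[of "B - {y}" x])
    finally have eq: "0 = Re (A y y) * p y + (Re (A y x) * p x + (\<Sum>u\<in>B - {y} - {x}. Re (A y u) * p u))" .
    have "(\<Sum>u\<in>B - {y} - {x}. Re (A y u) * p u) \<le> 0"
    proof (rule sum_nonpos)
      fix u assume u: "u \<in> B - {y} - {x}"
      then have "Re (A y u) \<le> 0" using stA yB unfolding stoquastic_term_def B_def by auto
      then show "Re (A y u) * p u \<le> 0" using pnn u by (simp add: mult_nonpos_nonneg)
    qed
    moreover have "Re (A y x) * p x < 0" using negA px by (simp add: mult_neg_pos)
    ultimately have "0 < Re (A y y) * p y" using eq by linarith
    then show ?thesis using pnn[OF yB] Rxx[OF yB] by (cases "p y = 0") auto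
  qed
  have ysupp: "y \<in> support n psi" using py y unfolding support_def p_def by simp
  have psix0: "psi x \<noteq> 0" using psireal[OF xB] px by auto
  have kern: "v y * psi x = v x * psi y" if v: "\<forall>u\<in>basis n. mat_vec n A v u = 0" for v
  proof -
    define c where "c = v x / psi x"
    define w where "w u = v u - c * psi u" for u
    have w0: "\<forall>u\<in>basis n. mat_vec n A w u = 0"
    proof
      fix u assume u: "u \<in> basis n"
      have "mat_vec n A w u = mat_vec n A v u - c * mat_vec n A psi u"
        unfolding mat_vec_def w_def by (simp add: algebra_simps sum_subtractf sum_distrib_left)
      then show "mat_vec n A w u = 0" using v Apsi u by simp
    qed
    have wx: "w x = 0" unfolding w_def c_def using psix0 by simp
    have xb: "x \<in> basis n" using xB B_def by simp
    have "w y = 0" using kernel_zero[OF psdA stA w0 wx xb y negA] .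
    then show ?thesis unfolding w_def c_def using psix0 by (simp add: field_simps)
  qed
  have prP: "zero_projector n A P" using proj a A_def P_def by blast
  have hP: "hermitian n P" using prP unfolding zero_projector_def by simp
  have idem: "\<forall>u\<in>B. \<forall>v\<in>B. mat_mult n P P u v = P u v"
    using prP unfolding zero_projector_def B_def by simp
  have iff: "(\<forall>u\<in>basis n. mat_vec n A v u = 0) \<longleftrightarrow> (\<forall>u\<in>basis n. mat_vec n P v u = v u)" for v
    using conjunct2[OF conjunct2[OF prP[unfolded zero_projector_def]]] by (rule spec)
  have col: "\<forall>w\<in>basis n. mat_vec n A (\<lambda>w. P w u) w = 0" if "u \<in> B" for u
    unfolding iff
  proof
    fix w assume "w \<in> basis n"
    then show "mat_vec n P (\<lambda>w. P w u) w = P w u"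
      using idem that B_def unfolding mat_vec_def mat_mult_def by auto
  qed
  have e1: "P y x * psi x = P x x * psi y" using kern[OF col[OF xB]] by simp
  have e2: "P y y * psi x = P x y * psi y" using kern[OF col[OF yB]] by simp
  have herm: "P v u = cnj (P u v)" if "u \<in> B" "v \<in> B" for u v
    using hP that unfolding hermitian_def B_def by blast
  define c where "c = Re (P x x)"
  have Pxx: "P x x = complex_of_real c"
  proof -
    have "P x x = cnj (P x x)" using herm[OF xB xB] .
    then have "Im (P x x) = 0" by (metis cnj.simps(2) complex.expand neg_equal_zero)
    then show ?thesis unfolding c_def by (simp add: complex_eq_iff)
  qed
  have c0: "c \<noteq> 0"
  proof
    assume "c = 0"
    then have "P x x = 0" using Pxx by simp
    moreover have "P x x = (\<Sum>w\<in>B. complex_of_real ((cmod (P x w))^2))"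
    proof -
      have "P x x = (\<Sum>w\<in>B. P x w * P w x)"
        using idem xB unfolding mat_mult_def B_def by simp
      also have "\<dots> = (\<Sum>w\<in>B. complex_of_real ((cmod (P x w))^2))"
      proof (rule sum.cong[OF refl])
        fix w assume "w \<in> B"
        then have "P w x = cnj (P x w)" using herm[OF xB] by blast
        then show "P x w * P w x = complex_of_real ((cmod (P x w))^2)"
          by (simp add: complex_mult_cnj cmod_power2)
      qed
      finally show ?thesis .
    qed
    ultimately have "complex_of_real (\<Sum>w\<in>B. (cmod (P x w))^2) = 0" by (simp add: of_real_sum)
    then have "(\<Sum>w\<in>B. (cmod (P x w))^2) = 0" by (simp only: of_real_eq_0_iff)
    then have "\<forall>w\<in>B. (cmod (P x w))^2 = 0"
      using sum_nonneg_eq_0_iff[OF fin, of "\<lambda>w. (cmod (P x w))^2"] by simp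
    then have "\<forall>w\<in>B. P x w = 0" by simp
    moreover have "\<forall>u\<in>basis n. mat_vec n P psi u = psi u" using Apsi iff[of psi] by simp
    then have "mat_vec n P psi x = psi x" using xB B_def by simp
    ultimately have "psi x = 0" unfolding mat_vec_def B_def by simp
    then show False using psix0 by simp
  qed
  define r where "r = p y / p x"
  have "P y x = complex_of_real (c * r)"
    using e1 psireal[OF xB] psireal[OF yB] px Pxx unfolding r_def by (simp add: field_simps)
  then have Pxy: "P x y = complex_of_real (c * r)" using herm[OF yB xB] by simp
  have "P y y = complex_of_real (c * r * r)"
    using e2 Pxy psireal[OF xB] psireal[OF yB] px unfolding r_def by (simp add: field_simps)
  then have "Re (P y y) / Re (P x x) = r^2" using c0 unfolding c_def[symmetric]
    by (simp add: power2_eq_square)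
  moreover have "0 < r" unfolding r_def using px py by simp
  ultimately have "sqrt (Re (P y y) / Re (P x x)) = r" by simp
  moreover have "psi y / psi x = complex_of_real r"
    unfolding r_def using psireal[OF xB] psireal[OF yB] by simp
  ultimately show ?thesis using ysupp unfolding P_def by simp
qed

end
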